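(* Let $g\in\mathcal{G}'=\{g^{\mathbf{s}}:\mathbf{s}\in\{1,2\}^n,n\in\mathbb{N}_0\}$. Then: (a) if $k$ is the largest vertex adjacent to $g$, then $k\ge7$, and the set of edges $[i,j]$ with $w_g([i,j])\ne0$ consists of the two triangles $[1,2],[1,3],[2,3]$ and $[k-2,k-1],[k-2,k],[k-1,k]$, with $w_g([1,3])=w_g([2,3])=-w_g([1,2])=-1$ and $w_g([k-2,k-1])=w_g([k-2,k])=-w_g([k-1,k])\in\{1,-1\}$, together with a path $[3,5]=[i_1,i_2],\dots,[i_{l-1},i_l]=[k-4,k-2]$ with $[i_1,i_2]<\cdots<[i_{l-1},i_l]$ whose edge weights alternate between $2$ and $-2$ and which contains no two consecutive edges of the form $[j-1,j],[j,j+1]$; (b) $\deg g=4+\sum_{i=1}^ns_i$ if $g=g^{\mathbf{s}}$ with $\mathbf{s}=(s_1,\dots,s_n)$; (c) $g\in I=\ker\varphi$.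
   Context: $\mathbb{K}$ is a field, $R=\mathbb{K}[x_{i,i+1},x_{i,i+2}: i\in\mathbb{N}]$, $\varphi:R\to\mathbb{K}[x_i:i\in\mathbb{N}]$ with $x_{i,i+1}\mapsto x_ix_{i+1}$, $x_{i,i+2}\mapsto x_ix_{i+2}$. $E=\{[i,i+1],[i,i+2]:i\in\mathbb{N}\}$ is totally ordered by $[i,j]\le[k,l]$ iff $i\le k$ and $j\le l$. For a binomial $g=\prod x_{i,j}^{u_{i,j}}-\prod x_{i,j}^{v_{i,j}}$, $w_g([i,j])=u_{i,j}-v_{i,j}$; conversely a finitely supported $w:E\to\mathbb{Z}$ has associated binomial $\prod x_{i,j}^{\max(w([i,j]),0)}-\prod x_{i,j}^{\max(-w([i,j]),0)}$. A vertex $n$ is adjacent to $g$ if $n\in\{i,j\}$ for some $[i,j]$ with $w_g([i,j])\ne0$. Define $g^{\emptyset}=x_{1,2}x_{3,5}^2x_{6,7}-x_{1,3}x_{2,3}x_{5,6}x_{5,7}$ and recursively, for $\mathbf{s}=(s_1,\dots,s_n)$, with $w=w_{g^{\mathbf{s}}}$ and $k$ the largest vertex adjacent to $g^{\mathbf{s}}$: $g^{(s_1,\dots,s_n,1)}$ is the binomial of the weight $[i,j]\mapsto w([i,j])$ if $[i,j]\le[k-4,k-2]$, $2w([i,j])$ if $[i,j]=[k-2,k]$, $-w([i-2,j-2])$ if $[i,j]\ge[k,k+1]$, $0$ otherwise; $g^{(s_1,\dots,s_n,2)}$ is the binomial of the weight $[i,j]\mapsto w([i,j])$ if $[i,j]\le[k-4,k-2]$,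 $2w([i,j])$ if $[i,j]=[k-2,k-1]$, $-2w([k-2,k-1])$ if $[i,j]=[k-1,k+1]$, $w([i-3,j-3])$ if $[i,j]\ge[k+1,k+2]$, $0$ otherwise. *)

theory Defs
  imports Main "HOL-Library.Poly_Mapping"
begin

text \<open>Edges [i,j] are pairs (i,j) of vertices; vertices are 1,2,3,...
  Weights are functions from pairs to int (supported on E).\<close>

type_synonym edge = "nat \<times> nat"
type_synonym weight = "edge \<Rightarrow> int"

text \<open>Polynomials over 'k in variables x_e (e a pair of vertices): exponent vectors
  (monomials) are finitely supported maps edge to nat.\<close>
type_synonym 'k epoly = "(edge \<Rightarrow>\<^sub>0 nat) \<Rightarrow>\<^sub>0 'k"
type_synonym 'k vpoly = "(nat \<Rightarrow>\<^sub>0 nat) \<Rightarrow>\<^sub>0 'k"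

definition inE :: "edge \<Rightarrow> bool" where
  "inE e \<longleftrightarrow> 1 \<le> fst e \<and> (snd e = fst e + 1 \<or> snd e = fst e + 2)"

definition edge_le :: "edge \<Rightarrow> edge \<Rightarrow> bool" where
  "edge_le e f \<longleftrightarrow> fst e \<le> fst f \<and> snd e \<le> snd f"

definition edge_less :: "edge \<Rightarrow> edge \<Rightarrow> bool" where
  "edge_less e f \<longleftrightarrow> edge_le e f \<and> e \<noteq> f"

definition maxv :: "weight \<Rightarrow> nat" where
  "maxv w = Max {n. \<exists>e. w e \<noteq> 0 \<and> (n = fst e \<or> n = snd e)}"

text \<open>weight of g^{()} = x12 x35^2 x67 - x13 x23 x56 x57\<close>
definition w0 :: weight where
  "w0 e = (if e = (1,2) then 1 else if e = (3,5) then 2 else if e = (6,7) then 1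
      else if e = (1,3) \<or> e = (2,3) \<or> e = (5,6) \<or> e = (5,7) then -1 else 0)"

definition step1 :: "weight \<Rightarrow> weight" where
  "step1 w = (let k = maxv w in (\<lambda>(i,j).
     if \<not> inE (i,j) then 0
     else if edge_le (i,j) (k-4,k-2) then w (i,j)
     else if (i,j) = (k-2,k) then 2 * w (i,j)
     else if edge_le (k,k+1) (i,j) then - w (i-2,j-2)
     else 0))"

definition step2 :: "weight \<Rightarrow> weight" where
  "step2 w = (let k = maxv w in (\<lambda>(i,j).
     if \<not> inE (i,j) then 0
     else if edge_le (i,j) (k-4,k-2) then w (i,j)
     else if (i,j) = (k-2,k-1) then 2 * w (i,j)
     else if (i,j) = (k-1,k+1) then -2 * w (k-2,k-1)
     else if edge_le (k+1,k+2) (i,j) then w (i-3,j-3)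
     else 0))"

definition step :: "nat \<Rightarrow> weight \<Rightarrow> weight" where
  "step t w = (if t = 1 then step1 w else step2 w)"

text \<open>weight of g^s, s = (s_1,...,s_n); s is extended at the end\<close>
definition W :: "nat list \<Rightarrow> weight" where
  "W s = foldl (\<lambda>w t. step t w) w0 s"

definition posmon :: "weight \<Rightarrow> edge \<Rightarrow>\<^sub>0 nat" where
  "posmon w = Abs_poly_mapping (\<lambda>e. nat (w e))"

definition negmon :: "weight \<Rightarrow> edge \<Rightarrow>\<^sub>0 nat" where
  "negmon w = Abs_poly_mapping (\<lambda>e. nat (- w e))"

definition binom :: "weight \<Rightarrow> 'k::field epoly" where
  "binom w = Poly_Mapping.single (posmon w) 1 - Poly_Mapping.single (negmon w) 1"

definition mdeg :: "('a \<Rightarrow>\<^sub>0 nat) \<Rightarrow> nat" where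
  "mdeg m = (\<Sum>e\<in>Poly_Mapping.keys m. Poly_Mapping.lookup m e)"

definition deg :: "'k::zero epoly \<Rightarrow> nat" where
  "deg p = Max (insert 0 (mdeg ` Poly_Mapping.keys p))"

text \<open>phi: x_{i,j} \<mapsto> x_i x_j, extended multiplicatively and K-linearly\<close>
definition vmon :: "(edge \<Rightarrow>\<^sub>0 nat) \<Rightarrow> (nat \<Rightarrow>\<^sub>0 nat)" where
  "vmon m = Abs_poly_mapping (\<lambda>n. \<Sum>e\<in>Poly_Mapping.keys m.
      ((if fst e = n then 1 else 0) + (if snd e = n then 1 else 0)) * Poly_Mapping.lookup m e)"

definition phi :: "'k::field epoly \<Rightarrow> 'k vpoly" where
  "phi p = (\<Sum>m\<in>Poly_Mapping.keys p. Poly_Mapping.single (vmon m) (Poly_Mapping.lookup p m))"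

end

theory Submission
  imports Defs
begin

definition T1 :: "(edge \<times> int) list" where
  "T1 = [((1,2),1),((1,3),-1),((2,3),-1)]"
definition T2 :: "nat \<Rightarrow> int \<Rightarrow> (edge \<times> int) list" where
  "T2 h c = [((h,h+1),c),((h,h+2),c),((h+1,h+2),-c)]"
definition pathL :: "nat list \<Rightarrow> (edge \<times> int) list" where
  "pathL p = map (\<lambda>m. ((p!m, p!Suc m), 2*(-1)^m)) [0..<length p - 1]"
definition sg :: "nat list \<Rightarrow> int" where
  "sg p = - ((-1)^length p)"
definition wlist :: "nat list \<Rightarrow> (edge \<times> int) list" where
  "wlist p = T1 @ pathL p @ T2 (last p) (sg p)"
definition wl :: "(edge \<times> int) list \<Rightarrow> weight" where
  "wl l e = sum_list (map (\<lambda>(e',v). if e' = e then v else 0) l)"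
definition inc :: "edge \<Rightarrow> nat \<Rightarrow> int" where
  "inc e n = (if fst e = n then 1 else 0) + (if snd e = n then 1 else 0)"
definition balL :: "(edge \<times> int) list \<Rightarrow> nat \<Rightarrow> int" where
  "balL l n = sum_list (map (\<lambda>(e,v). inc e n * v) l)"

definition Pinv :: "nat list \<Rightarrow> bool" where
  "Pinv p \<longleftrightarrow> length p \<ge> 2 \<and> p!0 = 3 \<and> p!1 = 5 \<and>
     (\<forall>m. m+1 < length p \<longrightarrow> p!(m+1) = p!m+1 \<or> p!(m+1) = p!m+2) \<and>
     (\<forall>m. m+2 < length p \<longrightarrow> \<not> (p!(m+1) = p!m+1 \<and> p!(m+2) = p!(m+1)+1)) \<and>
     p!(length p - 2) + 2 = p!(length p - 1)"

lemma wl_append[simp]: "wl (a@b) e = wl a e + wl b e"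
  by (simp add: wl_def)
lemma wl_Cons: "wl ((e',v)#l) e = (if e' = e then v else 0) + wl l e"
  by (simp add: wl_def)
lemma wl_Nil[simp]: "wl [] e = 0" by (simp add: wl_def)

lemma wl_notin: "e \<notin> fst ` set l \<Longrightarrow> wl l e = 0"
  by (induction l) (auto simp: wl_Cons)

lemma wl_in: "distinct (map fst l) \<Longrightarrow> (e,v) \<in> set l \<Longrightarrow> wl l e = v"
proof (induction l)
  case Nil then show ?case by simp
next
  case (Cons a l)
  obtain e0 v0 where a: "a = (e0,v0)" by (cases a)
  show ?case
  proof (cases "a = (e,v)")
    case True
    then have "e \<notin> fst ` set l" using Cons.prems a by auto
    then show ?thesis using True a by (simp add: wl_Cons wl_notin)
  next
    case False
    then have "(e,v) \<in> set l" using Cons.prems by auto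
    moreover have "e0 \<noteq> e" using Cons.prems a False \<open>(e,v) \<in> set l\<close>
      by (auto simp: image_iff)
    ultimately show ?thesis using Cons a by (simp add: wl_Cons)
  qed
qed

lemma sum_distinct:
  "distinct (map fst l) \<Longrightarrow>
   (\<Sum>e\<in>fst ` set l. G e (wl l e)) = sum_list (map (\<lambda>(e,v). G e v) l)"
proof (induction l)
  case Nil then show ?case by simp
next
  case (Cons a l)
  obtain e0 v0 where a: "a = (e0,v0)" by (cases a)
  have n: "e0 \<notin> fst ` set l" using Cons.prems a by auto
  have "(\<Sum>e\<in>fst ` set (a#l). G e (wl (a#l) e)) =
        G e0 (wl (a#l) e0) + (\<Sum>e\<in>fst ` set l. G e (wl (a#l) e))"
    using n a by simp
  also have "(\<Sum>e\<in>fst ` set l. G e (wl (a#l) e)) = (\<Sum>e\<in>fst ` set l. G e (wl l e))"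
    by (rule sum.cong) (use n a in \<open>auto simp: wl_Cons\<close>)
  also have "wl (a#l) e0 = v0" using n a by (simp add: wl_Cons wl_notin)
  finally show ?case using Cons a by simp
qed

lemma Pinv_mono: "Pinv p \<Longrightarrow> a < b \<Longrightarrow> b < length p \<Longrightarrow> p!a < p!b"
proof (induction b)
  case 0 then show ?case by simp
next
  case (Suc b)
  have "\<forall>m. m+1 < length p \<longrightarrow> p!(m+1) = p!m+1 \<or> p!(m+1) = p!m+2"
    using Suc.prems unfolding Pinv_def by blast
  then have "p!(b+1) = p!b+1 \<or> p!(b+1) = p!b+2" using Suc.prems by simp
  then have "p!b < p!Suc b" by auto
  then show ?case using Suc by (cases "a = b") auto
qed

lemma Pinv_mono_le: "Pinv p \<Longrightarrow> a \<le> b \<Longrightarrow> b < length p \<Longrightarrow> p!a \<le> p!b"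
  using Pinv_mono[of p a b] by (cases "a = b") auto

lemma Pinv_basic:
  assumes "Pinv p"
  shows "last p = p!(length p - 1)" "last p \<ge> 5" "p \<noteq> []" "length p \<ge> 2"
proof -
  show "length p \<ge> 2" "p \<noteq> []" using assms by (auto simp: Pinv_def)
  then show l: "last p = p!(length p - 1)" by (simp add: last_conv_nth)
  have "p!1 \<le> p!(length p - 1)" using Pinv_mono_le[OF assms, of 1 "length p - 1"] \<open>length p \<ge> 2\<close> by simp
  then show "last p \<ge> 5" using assms l by (simp add: Pinv_def)
qed

lemma pathL_edges:
  assumes "Pinv p" "e \<in> fst ` set (pathL p)"
  shows "inE e \<and> 3 \<le> fst e \<and> fst e + 2 \<le> last p \<and> snd e \<le> last p"
proof -
  obtain m where m: "m < length p - 1" "e = (p!m, p!Suc m)"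
    using assms(2) by (auto simp: pathL_def)
  then have m1: "m + 1 < length p" by simp
  have L: "length p \<ge> 2" "last p = p!(length p - 1)" using Pinv_basic[OF assms(1)] by auto
  have f0: "p!0 \<le> p!m" using Pinv_mono_le[OF assms(1), of 0 m] m1 by simp
  have f1: "p!m \<le> p!(length p - 2)" using Pinv_mono_le[OF assms(1), of m "length p - 2"] m by simp
  have f2: "p!Suc m \<le> p!(length p - 1)" using Pinv_mono_le[OF assms(1), of "Suc m" "length p - 1"] m by simp
  have f3: "p!Suc m = p!m+1 \<or> p!Suc m = p!m+2" using assms(1) m1 unfolding Pinv_def by (metis Suc_eq_plus1)
  have f4: "p!0 = 3" "p!(length p - 2) + 2 = p!(length p - 1)" using assms(1) unfolding Pinv_def by auto
  have a: "3 \<le> p!m" "p!m + 2 \<le> last p" "p!Suc m \<le> last p"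
    using f0 f1 f2 f4 L(2) by linarith+
  show ?thesis using m(2) a f3 unfolding inE_def by simp
qed

lemma pathL_zero:
  assumes "Pinv p" "\<not> (inE e \<and> 3 \<le> fst e \<and> fst e + 2 \<le> last p \<and> snd e \<le> last p)"
  shows "wl (pathL p) e = 0"
  using pathL_edges[OF assms(1)] assms(2) wl_notin by blast

lemma distinct_pathL: "Pinv p \<Longrightarrow> distinct (map fst (pathL p))"
proof -
  assume P: "Pinv p"
  have "map fst (pathL p) = map (\<lambda>m. (p!m, p!Suc m)) [0..<length p - 1]"
    by (simp add: pathL_def)
  moreover have "inj_on (\<lambda>m. (p!m, p!Suc m)) (set [0..<length p - 1])"
  proof (rule inj_onI)
    fix a b assume "a \<in> set [0..<length p - 1]" "b \<in> set [0..<length p - 1]"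
      "(p!a, p!Suc a) = (p!b, p!Suc b)"
    then have "a < length p" "b < length p" "p!a = p!b" by auto
    then show "a = b" using Pinv_mono[OF P, of a b] Pinv_mono[OF P, of b a]
      by (metis less_irrefl linorder_neqE_nat)
  qed
  ultimately show ?thesis by (simp add: distinct_map)
qed

lemma pathL_val: "Pinv p \<Longrightarrow> m + 1 < length p \<Longrightarrow> wl (pathL p) (p!m, p!(m+1)) = 2*(-1)^m"
  by (rule wl_in[OF distinct_pathL]) (auto simp: pathL_def)

lemma pathL_app: "p \<noteq> [] \<Longrightarrow> pathL (p@[x]) = pathL p @ [((last p, x), 2*(-1)^(length p - 1))]"
proof -
  assume "p \<noteq> []"
  then obtain n where L: "length p = Suc n" by (cases p) auto
  have "[0..<length (p@[x]) - 1] = [0..<length p - 1] @ [length p - 1]"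
    using L by simp
  moreover have "map (\<lambda>m. (((p@[x])!m, (p@[x])!Suc m), 2*(-1::int)^m)) [0..<length p - 1]
     = map (\<lambda>m. ((p!m, p!Suc m), 2*(-1)^m)) [0..<length p - 1]"
    by (rule map_cong) (auto simp: nth_append)
  moreover have "(p@[x])!(length p - 1) = last p" "(p@[x])!Suc (length p - 1) = x"
    using L \<open>p \<noteq> []\<close> by (auto simp: nth_append last_conv_nth)
  ultimately show ?thesis unfolding pathL_def using L by simp
qed


lemma wl_T1: "wl T1 e = (if e=(1,2) then 1 else if e=(1,3) \<or> e=(2,3) then -1 else 0)"
  by (auto simp: T1_def wl_def)
lemma wl_T2: "wl (T2 h c) e = (if e=(h,h+1) \<or> e=(h,h+2) then c else if e=(h+1,h+2) then -c else 0)"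
  by (auto simp: T2_def wl_def)
lemma sg_cases: "sg p = 1 \<or> sg p = -1"
  by (simp add: sg_def) (metis neg_one_even_power neg_one_odd_power verit_minus_simplify(4))
lemma sg_app: "sg (p@xs) = (-1)^length xs * sg p"
  by (simp add: sg_def power_add)
lemma pw: "length p \<ge> 1 \<Longrightarrow> 2*(-1::int)^(length p - 1) = 2 * sg p"
  by (cases "length p") (auto simp: sg_def)

lemma wl_wlist: "wl (wlist p) e = wl T1 e + wl (pathL p) e + wl (T2 (last p) (sg p)) e"
  by (simp add: wlist_def)

lemma maxv_lem:
  assumes P: "Pinv p"
  shows "maxv (wl (wlist p)) = last p + 2"
proof -
  define h where "h = last p"
  have h5: "h \<ge> 5" using Pinv_basic[OF P] h_def by simp
  define V where "V = {n. \<exists>e. wl (wlist p) e \<noteq> 0 \<and> (n = fst e \<or> n = snd e)}"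
  have bound: "fst e \<le> h+2 \<and> snd e \<le> h+2" if "wl (wlist p) e \<noteq> 0" for e
  proof (rule ccontr)
    assume a: "\<not> (fst e \<le> h+2 \<and> snd e \<le> h+2)"
    have "wl (pathL p) e = 0" using a by (intro pathL_zero[OF P]) (auto simp: h_def)
    moreover have "wl T1 e = 0" "wl (T2 h (sg p)) e = 0" using a h5 by (auto simp: wl_T1 wl_T2)
    ultimately show False using that by (simp add: wl_wlist h_def)
  qed
  have inV: "h+2 \<in> V"
  proof -
    have "wl (pathL p) (h+1,h+2) = 0" using h5 by (intro pathL_zero[OF P]) (auto simp: h_def)
    then have "wl (wlist p) (h+1,h+2) = - sg p" using h5 by (simp add: wl_wlist wl_T1 wl_T2 h_def)
    then have "wl (wlist p) (h+1,h+2) \<noteq> 0" using sg_cases[of p] by auto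
    then show ?thesis unfolding V_def by (metis (mono_tags, lifting) mem_Collect_eq snd_conv)
  qed
  have sub: "V \<subseteq> {..h+2}" unfolding V_def using bound by auto
  have "Max V = h+2"
    by (rule Max_eqI) (use sub inV finite_subset in auto)
  then show ?thesis unfolding maxv_def V_def h_def by simp
qed

lemma step1_lem:
  assumes P: "Pinv p"
  shows "step1 (wl (wlist p)) = wl (wlist (p@[last p + 2]))"
proof (rule ext)
  fix e :: edge
  obtain i j where e: "e = (i,j)" by (cases e)
  define h where "h = last p"
  have h5: "h \<ge> 5" using Pinv_basic[OF P] h_def by simp
  have L1: "length p \<ge> 1" using Pinv_basic[OF P] by simp
  have new: "wl (wlist (p@[h+2])) e' = wl T1 e' + wl (pathL p) e' + (if e' = (h,h+2) then 2*sg p else 0)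
     + wl (T2 (h+2) (- sg p)) e'" for e'
    using Pinv_basic[OF P] pw[OF L1] by (simp add: wlist_def pathL_app sg_app h_def wl_Cons)
  have Z: "wl (pathL p) (a,b) = 0" if "\<not> (inE (a,b) \<and> 3 \<le> a \<and> a + 2 \<le> h \<and> b \<le> h)" for a b
    using pathL_zero[OF P, of "(a,b)"] that h_def by simp
  have old: "wl (wlist p) e' = wl T1 e' + wl (pathL p) e' + wl (T2 h (sg p)) e'" for e'
    by (simp add: wl_wlist h_def)
  have K: "maxv (wl (wlist p)) = h + 2" using maxv_lem[OF P] h_def by simp
  have S0: "step1 (wl (wlist p)) (i,j) =
     (if \<not> inE (i,j) then 0
     else if edge_le (i,j) (h+2-4,h+2-2) then wl (wlist p) (i,j)
     else if (i,j) = (h+2-2,h+2) then 2 * wl (wlist p) (i,j)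
     else if edge_le (h+2,h+2+1) (i,j) then - wl (wlist p) (i-2,j-2)
     else 0)"
    unfolding step1_def K Let_def by (simp only: split_conv)
  have ar: "h+2-4 = h-2" "h+2-2 = h" "h+2+1 = h+3" by simp_all
  note S = S0[unfolded ar]
  show "step1 (wl (wlist p)) e = wl (wlist (p@[last p + 2])) e"
  proof -
    consider (a) "\<not> inE (i,j)" | (b) "inE (i,j)" "edge_le (i,j) (h-2,h)"
      | (c) "inE (i,j)" "\<not> edge_le (i,j) (h-2,h)" "(i,j) = (h,h+2)"
      | (d) "inE (i,j)" "\<not> edge_le (i,j) (h-2,h)" "(i,j) \<noteq> (h,h+2)" "edge_le (h+2,h+3) (i,j)"
      | (f) "inE (i,j)" "\<not> edge_le (i,j) (h-2,h)" "(i,j) \<noteq> (h,h+2)" "\<not> edge_le (h+2,h+3) (i,j)"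
      by blast
    then show ?thesis
    proof cases
      case a
      have "wl (pathL p) (i,j) = 0" using a Z by blast
      moreover have "wl T1 (i,j) = 0" using a by (auto simp: wl_T1 inE_def)
      moreover have "wl (T2 (h+2) (- sg p)) (i,j) = 0" using a by (auto simp: wl_T2 inE_def)
      moreover have "(i,j) \<noteq> (h,h+2)" using a h5 by (auto simp: inE_def)
      ultimately show ?thesis using a unfolding e S new[folded h_def] h_def[symmetric] by auto
    next
      case b
      have "wl (T2 (h+2) (- sg p)) (i,j) = 0" "wl (T2 h (sg p)) (i,j) = 0" "(i,j) \<noteq> (h,h+2)"
        using b h5 by (auto simp: wl_T2 edge_le_def)
      then show ?thesis using b unfolding e S new[folded h_def] h_def[symmetric] old by auto
    next
      case c
      have "wl (pathL p) (i,j) = 0" using c Z by auto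
      moreover have "wl T1 (i,j) = 0" "wl (T2 (h+2) (- sg p)) (i,j) = 0" "wl (T2 h (sg p)) (i,j) = sg p"
        using c h5 by (auto simp: wl_T1 wl_T2)
      ultimately show ?thesis using c unfolding e S new[folded h_def] h_def[symmetric] old by simp
    next
      case d
      then have ij: "h+2 \<le> i" "h+3 \<le> j" by (auto simp: edge_le_def)
      have "wl (pathL p) (i,j) = 0" "wl (pathL p) (i-2,j-2) = 0" using ij Z by auto
      moreover have "wl T1 (i,j) = 0" "wl T1 (i-2,j-2) = 0" using ij h5 by (auto simp: wl_T1)
      moreover have "(i,j) \<noteq> (h,h+2)" using ij by auto
      moreover have "wl (T2 (h+2) (- sg p)) (i,j) = - wl (T2 h (sg p)) (i-2,j-2)"
        using ij unfolding wl_T2 by auto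
      moreover have "step1 (wl (wlist p)) (i,j) = - wl (wlist p) (i-2,j-2)" using d ij unfolding S by simp
      ultimately show ?thesis using ij unfolding e new[folded h_def] h_def[symmetric] old by auto
    next
      case f
      have "\<not> (3 \<le> i \<and> i + 2 \<le> h \<and> j \<le> h)" using f by (auto simp: edge_le_def)
      then have "wl (pathL p) (i,j) = 0" using Z by auto
      moreover have "wl T1 (i,j) = 0" using f h5 by (auto simp: wl_T1 edge_le_def)
      moreover have "wl (T2 (h+2) (- sg p)) (i,j) = 0" using f by (auto simp: wl_T2 edge_le_def)
      moreover have "step1 (wl (wlist p)) (i,j) = 0"
      proof -
        have c: "inE (i,j) = True" "edge_le (i,j) (h-2,h) = False" "((i,j) = (h,h+2)) = False"
          "edge_le (h+2,h+3) (i,j) = False" using f by simp_all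
        show ?thesis unfolding S c by (simp only: if_True if_False not_True_eq_False)
      qed
      moreover have "(if (i,j) = (h,h+2) then 2*sg p else 0) = 0" using f(3) by (simp only: if_not_P if_False)
      ultimately show ?thesis unfolding e new[folded h_def] h_def[symmetric] by simp
    qed
  qed
qed


lemma pathL_app2: "p \<noteq> [] \<Longrightarrow> pathL (p@[a,b]) =
   pathL p @ [((last p, a), 2*(-1)^(length p - 1)), ((a,b), 2*(-1)^(length p))]"
proof -
  assume "p \<noteq> []"
  have "pathL (p@[a,b]) = pathL ((p@[a])@[b])" by simp
  also have "\<dots> = pathL (p@[a]) @ [((a, b), 2*(-1)^(length p))]"
    by (subst pathL_app) auto
  finally show ?thesis using pathL_app[OF \<open>p \<noteq> []\<close>, of a] by simp
qed

lemma pw2: "length p \<ge> 1 \<Longrightarrow> 2*(-1::int)^(length p) = - 2 * sg p"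
  by (simp add: sg_def)

lemma step2_lem:
  assumes P: "Pinv p"
  shows "step2 (wl (wlist p)) = wl (wlist (p@[last p + 1, last p + 3]))"
proof (rule ext)
  fix e :: edge
  obtain i j where e: "e = (i,j)" by (cases e)
  define h where "h = last p"
  have h5: "h \<ge> 5" using Pinv_basic[OF P] h_def by simp
  have L1: "length p \<ge> 1" using Pinv_basic[OF P] by simp
  have new: "wl (wlist (p@[h+1,h+3])) e' = wl T1 e' + wl (pathL p) e' + (if e' = (h,h+1) then 2*sg p else 0)
     + (if e' = (h+1,h+3) then -2*sg p else 0) + wl (T2 (h+3) (sg p)) e'" for e'
    using Pinv_basic[OF P] pw[OF L1] pw2[OF L1] by (simp add: wlist_def pathL_app2 sg_app h_def wl_Cons)
  have Z: "wl (pathL p) (a,b) = 0" if "\<not> (inE (a,b) \<and> 3 \<le> a \<and> a + 2 \<le> h \<and> b \<le> h)" for a b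
    using pathL_zero[OF P, of "(a,b)"] that h_def by simp
  have old: "wl (wlist p) e' = wl T1 e' + wl (pathL p) e' + wl (T2 h (sg p)) e'" for e'
    by (simp add: wl_wlist h_def)
  have K: "maxv (wl (wlist p)) = h + 2" using maxv_lem[OF P] h_def by simp
  have S0: "step2 (wl (wlist p)) (i,j) =
     (if \<not> inE (i,j) then 0
     else if edge_le (i,j) (h+2-4,h+2-2) then wl (wlist p) (i,j)
     else if (i,j) = (h+2-2,h+2-1) then 2 * wl (wlist p) (i,j)
     else if (i,j) = (h+2-1,h+2+1) then -2 * wl (wlist p) (h+2-2,h+2-1)
     else if edge_le (h+2+1,h+2+2) (i,j) then wl (wlist p) (i-3,j-3)
     else 0)"
    unfolding step2_def K Let_def by (simp only: split_conv)
  have ar: "h+2-4 = h-2" "h+2-2 = h" "h+2-1 = h+1" "h+2+1 = h+3" "h+2+2 = h+4" by simp_all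
  note S = S0[unfolded ar]
  have hh1: "wl (wlist p) (h,h+1) = sg p"
  proof -
    have "wl (pathL p) (h,h+1) = 0" using Z by auto
    moreover have "wl T1 (h,h+1) = 0" "wl (T2 h (sg p)) (h,h+1) = sg p" using h5 by (auto simp: wl_T1 wl_T2)
    ultimately show ?thesis unfolding old by simp
  qed
  show "step2 (wl (wlist p)) e = wl (wlist (p@[last p + 1, last p + 3])) e"
  proof -
    consider (a) "\<not> inE (i,j)" | (b) "inE (i,j)" "edge_le (i,j) (h-2,h)"
      | (c) "inE (i,j)" "\<not> edge_le (i,j) (h-2,h)" "(i,j) = (h,h+1)"
      | (c2) "inE (i,j)" "\<not> edge_le (i,j) (h-2,h)" "(i,j) \<noteq> (h,h+1)" "(i,j) = (h+1,h+3)"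
      | (d) "inE (i,j)" "\<not> edge_le (i,j) (h-2,h)" "(i,j) \<noteq> (h,h+1)" "(i,j) \<noteq> (h+1,h+3)" "edge_le (h+3,h+4) (i,j)"
      | (f) "inE (i,j)" "\<not> edge_le (i,j) (h-2,h)" "(i,j) \<noteq> (h,h+1)" "(i,j) \<noteq> (h+1,h+3)" "\<not> edge_le (h+3,h+4) (i,j)"
      by blast
    then show ?thesis
    proof cases
      case a
      have "wl (pathL p) (i,j) = 0" using a Z by blast
      moreover have "wl T1 (i,j) = 0" using a by (auto simp: wl_T1 inE_def)
      moreover have "wl (T2 (h+3) (sg p)) (i,j) = 0" using a by (auto simp: wl_T2 inE_def)
      moreover have "(i,j) \<noteq> (h,h+1)" "(i,j) \<noteq> (h+1,h+3)" using a h5 by (auto simp: inE_def)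
      ultimately show ?thesis using a unfolding e S new[folded h_def] h_def[symmetric] by auto
    next
      case b
      have "wl (T2 (h+3) (sg p)) (i,j) = 0" "wl (T2 h (sg p)) (i,j) = 0" "(i,j) \<noteq> (h,h+1)" "(i,j) \<noteq> (h+1,h+3)"
        using b h5 by (auto simp: wl_T2 edge_le_def)
      then show ?thesis using b unfolding e S new[folded h_def] h_def[symmetric] old by auto
    next
      case c
      have "wl (pathL p) (i,j) = 0" using c Z by auto
      moreover have "wl T1 (i,j) = 0" "wl (T2 (h+3) (sg p)) (i,j) = 0"
        using c h5 by (auto simp: wl_T1 wl_T2)
      ultimately show ?thesis using c hh1 unfolding e S new[folded h_def] h_def[symmetric] by simp
    next
      case c2
      have "wl (pathL p) (i,j) = 0" using c2 Z by auto
      moreover have "wl T1 (i,j) = 0" "wl (T2 (h+3) (sg p)) (i,j) = 0"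
        using c2 h5 by (auto simp: wl_T1 wl_T2)
      ultimately show ?thesis using c2 hh1 unfolding e S new[folded h_def] h_def[symmetric] by simp
    next
      case d
      then have ij: "h+3 \<le> i" "h+4 \<le> j" by (auto simp: edge_le_def)
      have "wl (pathL p) (i,j) = 0" "wl (pathL p) (i-3,j-3) = 0" using ij Z by auto
      moreover have "wl T1 (i,j) = 0" "wl T1 (i-3,j-3) = 0" using ij h5 by (auto simp: wl_T1)
      moreover have "(i,j) \<noteq> (h,h+1)" "(i,j) \<noteq> (h+1,h+3)" using ij by auto
      moreover have "wl (T2 (h+3) (sg p)) (i,j) = wl (T2 h (sg p)) (i-3,j-3)"
        using ij unfolding wl_T2 by auto
      moreover have "step2 (wl (wlist p)) (i,j) = wl (wlist p) (i-3,j-3)" using d ij unfolding S by simp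
      ultimately show ?thesis using ij unfolding e new[folded h_def] h_def[symmetric] old by auto
    next
      case f
      have "\<not> (3 \<le> i \<and> i + 2 \<le> h \<and> j \<le> h)" using f by (auto simp: edge_le_def)
      then have "wl (pathL p) (i,j) = 0" using Z by auto
      moreover have "wl T1 (i,j) = 0" using f h5 by (auto simp: wl_T1 edge_le_def)
      moreover have "wl (T2 (h+3) (sg p)) (i,j) = 0" using f by (auto simp: wl_T2 edge_le_def inE_def)
      ultimately show ?thesis using f unfolding e S new[folded h_def] h_def[symmetric] by auto
    qed
  qed
qed


lemma Pinv_app1:
  assumes P: "Pinv p" shows "Pinv (p@[last p + 2])"
proof -
  define L where "L = length p"
  have L2: "L \<ge> 2" and lst: "last p = p!(L-1)" using Pinv_basic[OF P] L_def by auto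
  have A: "\<forall>m. m+1 < L \<longrightarrow> p!(m+1) = p!m+1 \<or> p!(m+1) = p!m+2"
   and B: "\<forall>m. m+2 < L \<longrightarrow> \<not> (p!(m+1) = p!m+1 \<and> p!(m+2) = p!(m+1)+1)"
   and C: "p!(L - 2) + 2 = p!(L - 1)" "p!0 = 3" "p!1 = 5" using P unfolding Pinv_def L_def by auto
  let ?q = "p@[last p + 2]"
  have q1: "?q!m = p!m" if "m < L" for m using that by (simp add: nth_append L_def)
  have q2: "?q!L = last p + 2" by (simp add: L_def)
  have "\<forall>m. m+1 < length ?q \<longrightarrow> ?q!(m+1) = ?q!m+1 \<or> ?q!(m+1) = ?q!m+2"
  proof (intro allI impI)
    fix m assume "m+1 < length ?q"
    then have "m+1 < L \<or> m+1 = L" by (auto simp: L_def)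
    then show "?q!(m+1) = ?q!m+1 \<or> ?q!(m+1) = ?q!m+2"
    proof
      assume "m+1 < L" then show ?thesis using A q1 by simp
    next
      assume "m+1 = L" then have mm: "m = L - 1" by simp
      show ?thesis using q1[of m] q2 lst mm L2 \<open>m+1 = L\<close> by simp
    qed
  qed
  moreover have "\<forall>m. m+2 < length ?q \<longrightarrow> \<not> (?q!(m+1) = ?q!m+1 \<and> ?q!(m+2) = ?q!(m+1)+1)"
  proof (intro allI impI)
    fix m assume "m+2 < length ?q"
    then have "m+2 < L \<or> m+2 = L" by (auto simp: L_def)
    then show "\<not> (?q!(m+1) = ?q!m+1 \<and> ?q!(m+2) = ?q!(m+1)+1)"
    proof
      assume "m+2 < L" then show ?thesis using B q1 by simp
    next
      assume a: "m+2 = L"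
      then have mm: "m+1 = L-1" "m = L-2" by simp_all
      have "?q!(m+1) = p!(L-1)" "?q!m = p!(L-2)" using q1[of m] q1[of "m+1"] a mm by simp_all
      then show ?thesis using C by simp
    qed
  qed
  moreover have "?q!(length ?q - 2) + 2 = ?q!(length ?q - 1)"
    using q1[of "L-1"] q2 lst L2 by (simp add: L_def)
  moreover have "?q!0 = 3" "?q!1 = 5" using q1[of 0] q1[of 1] C L2 by auto
  ultimately show ?thesis unfolding Pinv_def using L2 by (simp add: L_def)
qed

lemma Pinv_app2:
  assumes P: "Pinv p" shows "Pinv (p@[last p + 1, last p + 3])"
proof -
  define L where "L = length p"
  have L2: "L \<ge> 2" and lst: "last p = p!(L-1)" using Pinv_basic[OF P] L_def by auto
  have A: "\<forall>m. m+1 < L \<longrightarrow> p!(m+1) = p!m+1 \<or> p!(m+1) = p!m+2"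
   and B: "\<forall>m. m+2 < L \<longrightarrow> \<not> (p!(m+1) = p!m+1 \<and> p!(m+2) = p!(m+1)+1)"
   and C: "p!(L - 2) + 2 = p!(L - 1)" "p!0 = 3" "p!1 = 5" using P unfolding Pinv_def L_def by auto
  let ?q = "p@[last p + 1, last p + 3]"
  have q1: "?q!m = p!m" if "m < L" for m using that by (simp add: nth_append L_def)
  have q2: "?q!L = last p + 1" "?q!(L+1) = last p + 3" by (simp_all add: L_def nth_append)
  have len: "length ?q = L + 2" by (simp add: L_def)
  have "\<forall>m. m+1 < length ?q \<longrightarrow> ?q!(m+1) = ?q!m+1 \<or> ?q!(m+1) = ?q!m+2"
  proof (intro allI impI)
    fix m assume "m+1 < length ?q"
    then have "m+1 < L \<or> m+1 = L \<or> m = L" using len by arith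
    then show "?q!(m+1) = ?q!m+1 \<or> ?q!(m+1) = ?q!m+2"
    proof (elim disjE)
      assume "m+1 < L" then show ?thesis using A q1 by simp
    next
      assume "m+1 = L" then have mm: "m = L - 1" by simp
      show ?thesis using q1[of m] q2 lst mm L2 \<open>m+1 = L\<close> by simp
    next
      assume "m = L" then show ?thesis using q2 by simp
    qed
  qed
  moreover have "\<forall>m. m+2 < length ?q \<longrightarrow> \<not> (?q!(m+1) = ?q!m+1 \<and> ?q!(m+2) = ?q!(m+1)+1)"
  proof (intro allI impI)
    fix m assume "m+2 < length ?q"
    then have "m+2 < L \<or> m+2 = L \<or> m+1 = L" using len by arith
    then show "\<not> (?q!(m+1) = ?q!m+1 \<and> ?q!(m+2) = ?q!(m+1)+1)"
    proof (elim disjE)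
      assume "m+2 < L" then show ?thesis using B q1 by simp
    next
      assume a: "m+2 = L"
      then have mm: "m+1 = L-1" "m = L-2" by simp_all
      have "?q!(m+1) = p!(L-1)" "?q!m = p!(L-2)" using q1[of m] q1[of "m+1"] a mm by simp_all
      then show ?thesis using C by simp
    next
      assume a: "m+1 = L"
      then have "?q!(m+1) = last p + 1" "?q!(m+2) = last p + 3" using q2 by simp_all
      then show ?thesis by simp
    qed
  qed
  moreover have "?q!(length ?q - 2) + 2 = ?q!(length ?q - 1)"
  proof -
    have "length ?q - 2 = L" "length ?q - 1 = L+1" using len by simp_all
    then show ?thesis using q2 by simp
  qed
  moreover have "?q!0 = 3" "?q!1 = 5" using q1[of 0] q1[of 1] C L2 by auto
  ultimately show ?thesis unfolding Pinv_def using L2 by (simp add: len)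
qed

lemma balL_append[simp]: "balL (a@b) n = balL a n + balL b n"
  by (simp add: balL_def)

definition Inv :: "nat list \<Rightarrow> bool" where
  "Inv p \<longleftrightarrow> Pinv p \<and> (\<forall>n. balL (wlist p) n = 0) \<and> sum_list (map snd (wlist p)) = 0
     \<and> sum_list (map (\<lambda>x. \<bar>snd x\<bar>) (wlist p)) = 2 * int (length p) + 4"

lemma Inv_app1: assumes I: "Inv p" shows "Inv (p@[last p + 2])"
proof -
  have P: "Pinv p" using I Inv_def by simp
  have L1: "length p \<ge> 1" using Pinv_basic[OF P] by simp
  define h where "h = last p"
  have W: "wlist (p@[h+2]) = T1 @ pathL p @ [((h,h+2), 2 * sg p)] @ T2 (h+2) (- sg p)"
    using Pinv_basic[OF P] pw[OF L1] by (simp add: wlist_def pathL_app sg_app h_def)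
  have W0: "wlist p = T1 @ pathL p @ T2 h (sg p)" by (simp add: wlist_def h_def)
  have "balL (wlist (p@[h+2])) n = balL (wlist p) n" for n
    unfolding W W0 by (simp add: balL_def T2_def inc_def)
  moreover have "sum_list (map snd (wlist (p@[h+2]))) = sum_list (map snd (wlist p))"
    unfolding W W0 by (simp add: T2_def)
  moreover have "sum_list (map (\<lambda>x. \<bar>snd x\<bar>) (wlist (p@[h+2]))) = sum_list (map (\<lambda>x. \<bar>snd x\<bar>) (wlist p)) + 2"
    unfolding W W0 using sg_cases[of p] by (auto simp: T2_def)
  ultimately show ?thesis using I Pinv_app1[OF P] unfolding Inv_def h_def by simp
qed

lemma Inv_app2: assumes I: "Inv p" shows "Inv (p@[last p + 1, last p + 3])"
proof -
  have P: "Pinv p" using I Inv_def by simp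
  have L1: "length p \<ge> 1" using Pinv_basic[OF P] by simp
  define h where "h = last p"
  have W: "wlist (p@[h+1,h+3]) = T1 @ pathL p @ [((h,h+1), 2 * sg p), ((h+1,h+3), -2 * sg p)] @ T2 (h+3) (sg p)"
    using Pinv_basic[OF P] pw[OF L1] pw2[OF L1] by (simp add: wlist_def pathL_app2 sg_app h_def)
  have W0: "wlist p = T1 @ pathL p @ T2 h (sg p)" by (simp add: wlist_def h_def)
  have "balL (wlist (p@[h+1,h+3])) n = balL (wlist p) n" for n
    unfolding W W0 by (simp add: balL_def T2_def inc_def)
  moreover have "sum_list (map snd (wlist (p@[h+1,h+3]))) = sum_list (map snd (wlist p))"
    unfolding W W0 by (simp add: T2_def)
  moreover have "sum_list (map (\<lambda>x. \<bar>snd x\<bar>) (wlist (p@[h+1,h+3]))) = sum_list (map (\<lambda>x. \<bar>snd x\<bar>) (wlist p)) + 4"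
    unfolding W W0 using sg_cases[of p] by (auto simp: T2_def)
  ultimately show ?thesis using I Pinv_app2[OF P] unfolding Inv_def h_def by simp
qed

lemma Inv_init: "Inv [3,5]"
  unfolding Inv_def Pinv_def
  by (auto simp: wlist_def balL_def T1_def T2_def pathL_def sg_def inc_def less_Suc_eq)

lemma W_init: "W [] = wl (wlist [3,5])"
  by (auto simp: W_def w0_def wlist_def T1_def T2_def pathL_def sg_def wl_def fun_eq_iff)

lemma main_inv: "set s \<subseteq> {1,2} \<Longrightarrow> \<exists>p. W s = wl (wlist p) \<and> Inv p \<and> length p = 2 + sum_list s"
proof (induction s rule: rev_induct)
  case Nil then show ?case using W_init Inv_init by auto
next
  case (snoc t s)
  then obtain p where p: "W s = wl (wlist p)" "Inv p" "length p = 2 + sum_list s" by auto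
  have P: "Pinv p" using p Inv_def by simp
  have Ws: "W (s@[t]) = step t (W s)" by (simp add: W_def)
  have "t = 1 \<or> t = 2" using snoc.prems by auto
  then show ?case
  proof
    assume t: "t = 1"
    show ?thesis
      by (rule exI[of _ "p@[last p + 2]"])
         (use p t Ws step1_lem[OF P] Inv_app1[OF p(2)] in \<open>simp add: step_def\<close>)
  next
    assume t: "t = 2"
    show ?thesis
      by (rule exI[of _ "p@[last p + 1, last p + 3]"])
         (use p t Ws step2_lem[OF P] Inv_app2[OF p(2)] in \<open>simp add: step_def\<close>)
  qed
qed

lemma posneg_sums:
  "int (sum_list (map (\<lambda>x. nat (snd x)) l)) - int (sum_list (map (\<lambda>x. nat (- snd x)) l)) = sum_list (map snd l)
   \<and> int (sum_list (map (\<lambda>x. nat (snd x)) l)) + int (sum_list (map (\<lambda>x. nat (- snd x)) l)) = sum_list (map (\<lambda>x. \<bar>snd x\<bar>) l)"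
  by (induction l) auto

lemma sum_keys_S:
  assumes "finite S" "Poly_Mapping.keys m \<subseteq> S" "\<And>e. F e 0 = 0"
  shows "(\<Sum>e\<in>Poly_Mapping.keys m. F e (Poly_Mapping.lookup m e)) = (\<Sum>e\<in>S. F e (Poly_Mapping.lookup m e))"
  by (rule sum.mono_neutral_left) (use assms in \<open>auto simp: in_keys_iff\<close>)

lemma poly_part:
  fixes l :: "(edge \<times> int) list" and D :: nat
  assumes dist: "distinct (map fst l)" and nz: "\<And>e v. (e,v) \<in> set l \<Longrightarrow> v \<noteq> 0"
    and bal: "\<And>n. balL l n = 0" and s0: "sum_list (map snd l) = 0"
    and sa: "sum_list (map (\<lambda>x. \<bar>snd x\<bar>) l) = 2 * int D"
    and w: "w = wl l" and ex: "(e0,v0) \<in> set l"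
  shows "deg (binom w :: 'k::field epoly) = D \<and> phi (binom w :: 'k epoly) = 0"
proof -
  define S where "S = fst ` set l"
  have fS: "finite S" by (simp add: S_def)
  have supp: "{e. w e \<noteq> 0} \<subseteq> S" using wl_notin w S_def by blast
  have fp: "finite {e. nat (w e) \<noteq> 0}" "finite {e. nat (- w e) \<noteq> 0}"
    by (rule finite_subset[OF _ fS], use supp in auto)+
  have lp: "Poly_Mapping.lookup (posmon w) = (\<lambda>e. nat (w e))"
    "Poly_Mapping.lookup (negmon w) = (\<lambda>e. nat (- w e))"
    using fp by (simp_all add: posmon_def negmon_def)
  have kp: "Poly_Mapping.keys (posmon w) \<subseteq> S" "Poly_Mapping.keys (negmon w) \<subseteq> S"
    using supp by (auto simp: in_keys_iff lp)
  define A where "A = sum_list (map (\<lambda>x. nat (snd x)) l)"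
  define B where "B = sum_list (map (\<lambda>x. nat (- snd x)) l)"
  have SA: "(\<Sum>e\<in>S. nat (w e)) = A"
    unfolding S_def w A_def by (subst sum_distinct[OF dist]) (simp add: split_def)
  have SB: "(\<Sum>e\<in>S. nat (- w e)) = B"
    unfolding S_def w B_def by (subst sum_distinct[OF dist]) (simp add: split_def)
  have AB: "A = D" "B = D" using posneg_sums[of l] s0 sa unfolding A_def B_def by linarith+
  have mp: "mdeg (posmon w) = D"
    unfolding mdeg_def using sum_keys_S[OF fS kp(1), of "\<lambda>e x. x"] SA AB lp by simp
  have mn: "mdeg (negmon w) = D"
    unfolding mdeg_def using sum_keys_S[OF fS kp(2), of "\<lambda>e x. x"] SB AB lp by simp
  have "w e0 = v0" using wl_in[OF dist ex] w by simp
  moreover have "nat v0 \<noteq> nat (- v0)" using nz[OF ex] by (cases "v0 > 0") auto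
  ultimately have "posmon w \<noteq> negmon w"
  proof -
    assume a: "w e0 = v0" "nat v0 \<noteq> nat (- v0)"
    show ?thesis
    proof
      assume "posmon w = negmon w"
      then have "Poly_Mapping.lookup (posmon w) e0 = Poly_Mapping.lookup (negmon w) e0" by simp
      then show False using a lp by simp
    qed
  qed
  define b where "b = (binom w :: 'k epoly)"
  have lb: "Poly_Mapping.lookup b m = (if m = posmon w then 1 else 0) - (if m = negmon w then 1 else 0)" for m
    unfolding b_def binom_def by (simp add: lookup_minus lookup_single when_def)
  have kb: "Poly_Mapping.keys b = {posmon w, negmon w}"
    using \<open>posmon w \<noteq> negmon w\<close> by (auto simp: in_keys_iff lb split: if_splits)
  have "deg b = D" unfolding deg_def kb using mp mn by simp
  moreover have "vmon (posmon w) = vmon (negmon w)"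
  proof -
    have "(\<Sum>e\<in>Poly_Mapping.keys (posmon w). ((if fst e = n then 1 else 0) + (if snd e = n then 1 else 0)) * Poly_Mapping.lookup (posmon w) e)
        = (\<Sum>e\<in>Poly_Mapping.keys (negmon w). ((if fst e = n then 1 else 0) + (if snd e = n then 1 else 0)) * Poly_Mapping.lookup (negmon w) e)"
      (is "?L = ?R") for n
    proof -
      have L: "?L = (\<Sum>e\<in>S. nat (inc e n) * nat (w e))"
        by (subst sum_keys_S[OF fS kp(1)]) (auto simp: lp inc_def intro!: sum.cong)
      have R: "?R = (\<Sum>e\<in>S. nat (inc e n) * nat (- w e))"
        by (subst sum_keys_S[OF fS kp(2)]) (auto simp: lp inc_def intro!: sum.cong)
      have i0: "inc e n \<ge> 0" for e by (simp add: inc_def)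
      have eq: "int (\<Sum>e\<in>S. nat (inc e n) * nat (w e)) - int (\<Sum>e\<in>S. nat (inc e n) * nat (- w e))
          = (\<Sum>e\<in>S. inc e n * w e)"
        by (simp add: of_nat_sum sum_subtractf[symmetric] i0 algebra_simps, rule sum.cong, auto)
      also have "\<dots> = balL l n"
        unfolding S_def w balL_def by (subst sum_distinct[OF dist]) (simp add: split_def)
      finally have "int (\<Sum>e\<in>S. nat (inc e n) * nat (w e)) = int (\<Sum>e\<in>S. nat (inc e n) * nat (- w e))"
        using bal[of n] by linarith
      then have "(\<Sum>e\<in>S. nat (inc e n) * nat (w e)) = (\<Sum>e\<in>S. nat (inc e n) * nat (- w e))"
        by (simp only: of_nat_eq_iff)
      then show ?thesis using L R by simp
    qed
    then show ?thesis unfolding vmon_def by simp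
  qed
  then have "phi b = 0"
    unfolding phi_def kb using \<open>posmon w \<noteq> negmon w\<close> lb
    by (simp add: single_uminus)
  ultimately show ?thesis unfolding b_def by simp
qed


lemma distinct_wlist: assumes P: "Pinv p" shows "distinct (map fst (wlist p))"
proof -
  have h5: "last p \<ge> 5" using Pinv_basic[OF P] by simp
  have d1: "distinct (map fst T1)" by (simp add: T1_def)
  have d2: "distinct (map fst (T2 (last p) (sg p)))" by (simp add: T2_def)
  have d3: "distinct (map fst (pathL p))" using distinct_pathL[OF P] .
  have x1: "fst ` set T1 \<inter> fst ` set (pathL p) = {}"
    using pathL_edges[OF P] by (force simp: T1_def)
  have x2: "fst ` set T1 \<inter> fst ` set (T2 (last p) (sg p)) = {}"
    using h5 by (auto simp: T1_def T2_def)
  have x3: "fst ` set (pathL p) \<inter> fst ` set (T2 (last p) (sg p)) = {}"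
    using pathL_edges[OF P] by (force simp: T2_def)
  show ?thesis unfolding wlist_def using d1 d2 d3 x1 x2 x3
    by (auto simp: distinct_append)
qed

lemma vals_nz: "(e,v) \<in> set (wlist p) \<Longrightarrow> v \<noteq> 0"
  using sg_cases[of p] by (auto simp: wlist_def T1_def T2_def pathL_def)

lemma edges_wlist: "fst ` set (wlist p) = {(1,2),(1,3),(2,3)} \<union> {(p!m, p!(m+1)) | m. m < length p - 1}
   \<union> {(last p,last p+1),(last p,last p+2),(last p+1,last p+2)}"
proof -
  have "fst ` set (pathL p) = {(p!m, p!(m+1)) | m. m < length p - 1}"
    by (auto simp: pathL_def image_iff) (use atLeastLessThan_iff in blast)
  then show ?thesis by (auto simp: wlist_def T1_def T2_def)
qed

theorem proposition6p5:
  fixes s :: "nat list"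
  assumes "set s \<subseteq> {1, 2}"
  shows "(let w = W s; k = maxv w in
           k \<ge> 7 \<and>
           (\<exists>p :: nat list. length p \<ge> 2 \<and>
              p ! 0 = 3 \<and> p ! 1 = 5 \<and>
              p ! (length p - 2) = k - 4 \<and> p ! (length p - 1) = k - 2 \<and>
              (\<forall>m < length p - 1. inE (p ! m, p ! (m+1))) \<and>
              (\<forall>m < length p - 2. edge_less (p ! m, p ! (m+1)) (p ! (m+1), p ! (m+2))) \<and>
              {e. w e \<noteq> 0} =
                {(1,2), (1,3), (2,3), (k-2,k-1), (k-2,k), (k-1,k)} \<union>
                {(p ! m, p ! (m+1)) | m. m < length p - 1} \<and>
              (\<forall>m < length p - 1. w (p ! m, p ! (m+1)) \<in> {2, -2}) \<and>
              (\<forall>m < length p - 2. w (p ! (m+1), p ! (m+2)) = - w (p ! m, p ! (m+1))) \<and>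
              (\<forall>m < length p - 2. \<not> (p ! (m+1) = p ! m + 1 \<and> p ! (m+2) = p ! (m+1) + 1))) \<and>
           w (1,3) = -1 \<and> w (2,3) = -1 \<and> w (1,2) = 1 \<and>
           w (k-2,k-1) = w (k-2,k) \<and> w (k-2,k) = - w (k-1,k) \<and> w (k-1,k) \<in> {1, -1})
         \<and> deg (binom (W s) :: 'k::field epoly) = 4 + sum_list s
         \<and> phi (binom (W s) :: 'k::field epoly) = 0"
proof -
  obtain p where p: "W s = wl (wlist p)" "Inv p" "length p = 2 + sum_list s"
    using main_inv[OF assms] by blast
  have P: "Pinv p" using p(2) Inv_def by simp
  define h where "h = last p"
  define w where "w = W s"
  have wdef: "w = wl (wlist p)" using p w_def by simp
  have K: "maxv w = h+2" using maxv_lem[OF P] wdef h_def by simp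
  have h5: "h \<ge> 5" using Pinv_basic[OF P] h_def by simp
  have D: "distinct (map fst (wlist p))" using distinct_wlist[OF P] .
  have val: "w e = v" if "(e,v) \<in> set (wlist p)" for e v using wl_in[OF D that] wdef by simp
  have supp: "{e. w e \<noteq> 0} = fst ` set (wlist p)"
  proof
    show "{e. w e \<noteq> 0} \<subseteq> fst ` set (wlist p)" using wl_notin wdef by blast
    show "fst ` set (wlist p) \<subseteq> {e. w e \<noteq> 0}"
    proof
      fix e assume "e \<in> fst ` set (wlist p)"
      then obtain v where ev: "(e,v) \<in> set (wlist p)" by force
      show "e \<in> {e. w e \<noteq> 0}" using val[OF ev] vals_nz[OF ev] by simp
    qed
  qed
  have I: "\<And>n. balL (wlist p) n = 0" "sum_list (map snd (wlist p)) = 0"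
    "sum_list (map (\<lambda>x. \<bar>snd x\<bar>) (wlist p)) = 2 * int (length p + 2)"
    using p(2) unfolding Inv_def by auto
  have m12: "((1,2),1) \<in> set (wlist p)" by (simp add: wlist_def T1_def)
  have poly: "deg (binom w :: 'k epoly) = length p + 2 \<and> phi (binom w :: 'k epoly) = 0"
    by (rule poly_part[OF D vals_nz I(1) I(2) I(3) wdef m12])
  have L2: "length p \<ge> 2" and lst: "h = p!(length p - 1)" using Pinv_basic[OF P] h_def by auto
  have C: "p!0 = 3" "p!1 = 5" "p!(length p - 2) + 2 = p!(length p - 1)"
    "\<forall>m. m+2 < length p \<longrightarrow> \<not> (p!(m+1) = p!m+1 \<and> p!(m+2) = p!(m+1)+1)"
    using P unfolding Pinv_def by auto
  have pv: "w (p!m, p!(m+1)) = 2*(-1)^m" if "m < length p - 1" for m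
    by (rule val) (use that in \<open>force simp: wlist_def pathL_def\<close>)
  have ie: "inE (p!m, p!(m+1))" if "m < length p - 1" for m
  proof -
    have "(p!m, p!(m+1)) \<in> fst ` set (pathL p)" using that by (force simp: pathL_def)
    then show ?thesis using pathL_edges[OF P] by blast
  qed
  have el: "edge_less (p!m, p!(m+1)) (p!(m+1), p!(m+2))" if "m < length p - 2" for m
  proof -
    have "p!m < p!(m+1)" "p!(m+1) < p!(m+2)" using Pinv_mono[OF P] that by auto
    then show ?thesis by (auto simp: edge_less_def edge_le_def)
  qed
  have t: "w (1,3) = -1" "w (2,3) = -1" "w (1,2) = 1" "w (h,h+1) = sg p" "w (h,h+2) = sg p" "w (h+1,h+2) = - sg p"
    by (rule val, simp add: wlist_def T1_def T2_def h_def)+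
  have ar: "h+2-4 = h-2" "h+2-2 = h" "h+2-1 = h+1" by simp_all
  have sset: "{e. w e \<noteq> 0} = {(1,2), (1,3), (2,3), (h,h+1), (h,h+2), (h+1,h+2)} \<union>
                {(p ! m, p ! (m+1)) | m. m < length p - 1}"
    unfolding supp edges_wlist h_def by auto
  have part_a: "h+2 \<ge> 7 \<and>
           (\<exists>p :: nat list. length p \<ge> 2 \<and>
              p ! 0 = 3 \<and> p ! 1 = 5 \<and>
              p ! (length p - 2) = h - 2 \<and> p ! (length p - 1) = h \<and>
              (\<forall>m < length p - 1. inE (p ! m, p ! (m+1))) \<and>
              (\<forall>m < length p - 2. edge_less (p ! m, p ! (m+1)) (p ! (m+1), p ! (m+2))) \<and>
              {e. w e \<noteq> 0} =
                {(1,2), (1,3), (2,3), (h,h+1), (h,h+2), (h+1,h+2)} \<union>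
                {(p ! m, p ! (m+1)) | m. m < length p - 1} \<and>
              (\<forall>m < length p - 1. w (p ! m, p ! (m+1)) \<in> {2, -2}) \<and>
              (\<forall>m < length p - 2. w (p ! (m+1), p ! (m+2)) = - w (p ! m, p ! (m+1))) \<and>
              (\<forall>m < length p - 2. \<not> (p ! (m+1) = p ! m + 1 \<and> p ! (m+2) = p ! (m+1) + 1))) \<and>
           w (1,3) = -1 \<and> w (2,3) = -1 \<and> w (1,2) = 1 \<and>
           w (h,h+1) = w (h,h+2) \<and> w (h,h+2) = - w (h+1,h+2) \<and> w (h+1,h+2) \<in> {1, -1}"
  proof (intro conjI exI[of _ p] allI impI)
    show "h+2 \<ge> 7" using h5 by simp
    show "p!(length p - 2) = h - 2" using C(3) lst by simp
    show "p!(length p - 1) = h" using lst by simp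
    fix m
    show "m < length p - 1 \<Longrightarrow> w (p ! m, p ! (m+1)) \<in> {2, -2}"
    proof -
      assume "m < length p - 1"
      then show ?thesis using pv[of m] by (cases "even m") auto
    qed
    show "m < length p - 2 \<Longrightarrow> w (p ! (m+1), p ! (m+2)) = - w (p ! m, p ! (m+1))"
    proof -
      assume "m < length p - 2"
      then show ?thesis using pv[of m] pv[of "m+1"] by simp
    qed
    show "m < length p - 2 \<Longrightarrow> \<not> (p ! (m+1) = p ! m + 1 \<and> p ! (m+2) = p ! (m+1) + 1)"
      using C(4) by auto
  qed (use L2 C ie el sset t sg_cases[of p] in auto)
  show ?thesis
    unfolding Let_def w_def[symmetric] K ar
    using part_a poly p(3) by simp
qed

end
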